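(* For every $\varepsilon>0$ and $g\in C([0,1])$, $$\|E_1 g\|_{L^{4+\varepsilon}(\mathbb{R}^2)}\lesssim_\varepsilon\|g\|_{L^4}.$$
   Context: Fix $\varphi\in C_c^\infty(\mathbb{R})$ supported in a small open neighborhood of $[0,1]$ with $\varphi\equiv1$ on $[0,1]$; set $\varphi_{n,m}(x)=\varphi(x)e^{2\pi i nx}e^{2\pi i mx^2}$ for $n,m\in\mathbb{Z}$; $\chi_n$ is the indicator of $[n,n+1)$. Then $E_1 g(x,t)=\sum_{n,m\in\mathbb{Z}}\langle g,\varphi_{n,m}\rangle\chi_n(x)\chi_m(t)$, with $\langle f,h\rangle=\int f\bar h$. *)

theory Defs
  imports "HOL-Analysis.Analysis"
begin

definition smooth_compact_support :: "(real \<Rightarrow> real) \<Rightarrow> bool" where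
  "smooth_compact_support \<phi> \<longleftrightarrow>
     (\<forall>k. ((deriv ^^ k) \<phi>) differentiable_on UNIV) \<and> compact (closure {x. \<phi> x \<noteq> 0})"

definition phi_nm :: "(real \<Rightarrow> real) \<Rightarrow> int \<Rightarrow> int \<Rightarrow> real \<Rightarrow> complex" where
  "phi_nm \<phi> n m x = complex_of_real (\<phi> x) * exp (2 * pi * \<i> * of_int n * x)
                      * exp (2 * pi * \<i> * of_int m * x ^ 2)"

definition chi :: "int \<Rightarrow> real \<Rightarrow> complex" where
  "chi n x = indicator {real_of_int n..<real_of_int n + 1} x"

definition ext0 :: "(real \<Rightarrow> complex) \<Rightarrow> real \<Rightarrow> complex" where
  "ext0 g x = (if x \<in> {0..1} then g x else 0)"

definition inner_L2 :: "(real \<Rightarrow> complex) \<Rightarrow> (real \<Rightarrow> complex) \<Rightarrow> complex" where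
  "inner_L2 f h = (LINT x|lborel. f x * cnj (h x))"

definition E1 :: "(real \<Rightarrow> real) \<Rightarrow> (real \<Rightarrow> complex) \<Rightarrow> real \<times> real \<Rightarrow> complex" where
  "E1 \<phi> g = (\<lambda>(x, t). \<Sum>\<^sub>\<infinity>(n, m)\<in>(UNIV :: (int \<times> int) set).
       inner_L2 (ext0 g) (phi_nm \<phi> n m) * chi n x * chi m t)"

definition Lp_norm :: "'a measure \<Rightarrow> real \<Rightarrow> ('a \<Rightarrow> complex) \<Rightarrow> ennreal" where
  "Lp_norm M p f =
     (let I = (\<integral>\<^sup>+ z. ennreal (cmod (f z) powr p) \<partial>M)
      in if I = \<infinity> then \<infinity> else ennreal (enn2real I powr (1 / p)))"

end

theory Submission
  imports Defs "HOL-Library.Nat_Bijection"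
begin


definition ee :: "real \<Rightarrow> complex" where "ee t = cis (2 * pi * t)"

lemma ee_add: "ee (a + b) = ee a * ee b"
  by (simp add: ee_def cis_mult distrib_left)

lemma ee_cnj: "cnj (ee t) = ee (- t)"
  by (simp add: ee_def cis_cnj)

lemma norm_ee[simp]: "norm (ee t) = 1"
  by (simp add: ee_def)

lemma ee_int: "ee (of_int k) = 1"
  unfolding ee_def by (rule cis_multiple_2pi) simp

lemma ee_zero[simp]: "ee 0 = 1"
  by (simp add: ee_def)

lemma ee_exp: "ee t = exp (of_real t * (2 * of_real pi * \<i>))"
  by (simp add: ee_def cis_conv_exp mult_ac)

lemma continuous_ee: "continuous_on UNIV ee"
  unfolding ee_def by (intro continuous_intros)

lemma borel_measurable_ee[measurable (raw)]:
  "f \<in> borel_measurable M \<Longrightarrow> (\<lambda>x. ee (f x)) \<in> borel_measurable M"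
  using continuous_ee borel_measurable_continuous_onI measurable_compose by blast

lemma borel_measurable_cnj'[measurable (raw)]:
  "f \<in> borel_measurable M \<Longrightarrow> (\<lambda>x. cnj (f x :: complex)) \<in> borel_measurable M"
  using borel_measurable_continuous_onI[OF continuous_on_cnj[OF continuous_on_id]] measurable_compose by blast

lemma intg_bdd:
  fixes f :: "real \<Rightarrow> 'b::{banach,second_countable_topology}"
  assumes "f \<in> borel_measurable lborel" "\<And>x. norm (f x) \<le> B" "\<And>x. x \<notin> {a..b} \<Longrightarrow> f x = 0"
  shows "integrable lborel f"
  by (rule integrableI_bounded_set[where A="{a..b}" and B=B]) (use assms in \<open>auto simp: emeasure_lborel_Icc_eq\<close>)

lemma orth_HK:
  fixes k :: int and lam c :: real
  assumes lam: "lam > 0"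
  shows "((\<lambda>x. ee (of_int k * lam * x)) has_integral (if k = 0 then 1 / lam else 0)) {c..c + 1/lam}"
proof (cases "k = 0")
  case True
  then show ?thesis using lam
    using has_integral_const_real[of "1::complex" c "c + 1/lam"]
    by (simp add: content_real scaleR_conv_of_real)
next
  case False
  define \<alpha> where "\<alpha> = of_real (of_int k * lam) * (2 * of_real pi * \<i>)"
  have a0: "\<alpha> \<noteq> 0" using False lam by (simp add: \<alpha>_def)
  define F where "F x = ee (of_int k * lam * x) / \<alpha>" for x
  have eq: "ee (of_int k * lam * x) = exp (of_real x * \<alpha>)" for x
    by (simp add: ee_exp \<alpha>_def mult_ac)
  have der: "(F has_vector_derivative ee (of_int k * lam * x)) (at x within {c..c+1/lam})" for x
  proof -
    have "((\<lambda>z. exp (z * \<alpha>) / \<alpha>) has_field_derivative exp (of_real x * \<alpha>)) (at (of_real x))"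
      using a0 by (auto intro!: derivative_eq_intros)
    note d = this
    have "F = (\<lambda>x. exp (of_real x * \<alpha>) / \<alpha>)" by (simp add: F_def[abs_def] eq)
    then show ?thesis using has_vector_derivative_real_field[OF d] by (simp add: eq)
  qed
  have "((\<lambda>x. ee (of_int k * lam * x)) has_integral (F (c + 1/lam) - F c)) {c..c + 1/lam}"
    by (rule fundamental_theorem_of_calculus) (use lam der in auto)
  moreover have "F (c + 1/lam) = F c"
  proof -
    have "of_int k * lam * (c + 1/lam) = of_int k * lam * c + of_int k" using lam by (simp add: field_simps)
    then show ?thesis by (simp add: F_def ee_add ee_int)
  qed
  ultimately show ?thesis using False by simp
qed

lemma orth:
  fixes k :: int and lam c :: real
  assumes lam: "lam > 0"
  shows "(LINT x|lborel. indicator {c..c+1/lam} x * ee (of_int k * lam * x)) = (if k = 0 then 1 / lam else 0)"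
proof -
  have si: "set_integrable lborel {c..c+1/lam} (\<lambda>x. ee (of_int k * lam * x))"
    unfolding set_integrable_def
    by (rule borel_integrable_compact) (auto intro!: continuous_on_compose2[OF continuous_ee] continuous_intros)
  have "(LINT x|lborel. indicator {c..c+1/lam} x * ee (of_int k * lam * x)) = 
        (LINT x:{c..c+1/lam}|lborel. ee (of_int k * lam * x))"
    unfolding set_lebesgue_integral_def
    by (intro Bochner_Integration.integral_cong) (auto simp: indicator_def)
  also have "\<dots> = integral {c..c+1/lam} (\<lambda>x. ee (of_int k * lam * x))"
    using set_borel_integral_eq_integral(2)[OF si] .
  also have "\<dots> = (if k = 0 then 1 / lam else 0)"
    using orth_HK[OF lam] by (rule integral_unique)
  finally show ?thesis .
qed

lemma cmod_diff_sq:
  fixes a b :: complex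
  shows "(cmod (a - b))^2 = (cmod a)^2 - 2 * Re (a * cnj b) + Re (b * cnj b)"
  by (simp only: cmod_power2) (simp add: power2_eq_square algebra_simps)

lemma bessel:
  fixes h :: "real \<Rightarrow> complex" and N :: "int set" and lam c B :: real
  assumes lam: "lam > 0" and N: "finite N" and hm[measurable]: "h \<in> borel_measurable lborel"
    and hb: "\<And>x. norm (h x) \<le> B" and hs: "\<And>x. x \<notin> {c..c+1/lam} \<Longrightarrow> h x = 0"
  shows "lam * (\<Sum>m\<in>N. (cmod (LINT x|lborel. h x * ee (- (of_int m * lam * x))))\<^sup>2)
           \<le> (LINT x|lborel. (cmod (h x))\<^sup>2)"
proof -
  define S where "S = {c..c+1/lam}"
  define cf where "cf m = (LINT x|lborel. h x * ee (- (of_int m * lam * x)))" for m :: int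
  define T where "T x = of_real lam * (\<Sum>m\<in>N. cf m * ee (of_int m * lam * x)) * indicator S x" for x
  define TB where "TB = lam * (\<Sum>m\<in>N. cmod (cf m))"
  have B0: "0 \<le> B" using hb[of 0] norm_ge_zero order_trans by blast
  have Tb: "norm (T x) \<le> TB" for x
  proof -
    have "norm (T x) \<le> lam * norm (\<Sum>m\<in>N. cf m * ee (of_int m * lam * x)) * 1"
      unfolding T_def norm_mult by (cases "x \<in> S") (use lam in auto)
    also have "\<dots> \<le> lam * (\<Sum>m\<in>N. cmod (cf m))"
      using lam by (simp, intro mult_left_mono order_trans[OF norm_sum]) (auto simp: norm_mult)
    finally show ?thesis by (simp add: TB_def)
  qed
  have TB0: "0 \<le> TB" using Tb[of 0] norm_ge_zero order_trans by blast
  have Ts: "x \<notin> {c..c+1/lam} \<Longrightarrow> T x = 0" for x by (simp add: T_def S_def)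
  have Tm[measurable]: "T \<in> borel_measurable lborel" unfolding T_def S_def by measurable
  have hS: "h x * indicator S x = h x" for x using hs[of x] by (auto simp: S_def indicator_def)
  have O: "(LINT x|lborel. indicator S x * (ee (of_int m * lam * x) * cnj (ee (of_int k * lam * x))))
      = (if m = k then 1/lam else 0)" for m k :: int
  proof -
    have "(LINT x|lborel. indicator S x * (ee (of_int m * lam * x) * cnj (ee (of_int k * lam * x))))
        = (LINT x|lborel. indicator S x * ee (of_int (m - k) * lam * x))"
      by (intro Bochner_Integration.integral_cong refl) (simp add: ee_cnj ee_add[symmetric] algebra_simps)
    also have "\<dots> = (if m - k = 0 then 1/lam else 0)" unfolding S_def by (rule orth[OF lam])
    finally show ?thesis by simp
  qed
  have int_cf: "integrable lborel (\<lambda>x. h x * ee (- (of_int m * lam * x)))" for m :: int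
    by (rule intg_bdd[where B=B and a=c and b="c+1/lam"]) (auto simp: norm_mult hb hs)
  have I1: "(LINT x|lborel. h x * cnj (T x)) = of_real (lam * (\<Sum>m\<in>N. (cmod (cf m))\<^sup>2))"
  proof -
    have "(LINT x|lborel. h x * cnj (T x)) =
        (LINT x|lborel. (\<Sum>m\<in>N. of_real lam * cnj (cf m) * (h x * ee (- (of_int m * lam * x)))))"
    proof (intro Bochner_Integration.integral_cong refl)
      fix x
      have "h x * cnj (T x) = (h x * indicator S x) * (of_real lam * (\<Sum>m\<in>N. cnj (cf m) * ee (- (of_int m * lam * x))))"
        by (simp add: T_def ee_cnj mult_ac indicator_def)
      also have "\<dots> = (\<Sum>m\<in>N. of_real lam * cnj (cf m) * (h x * ee (- (of_int m * lam * x))))"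
        unfolding hS by (simp add: sum_distrib_left mult_ac)
      finally show "h x * cnj (T x) = (\<Sum>m\<in>N. of_real lam * cnj (cf m) * (h x * ee (- (of_int m * lam * x))))" .
    qed
    also have "\<dots> = (\<Sum>m\<in>N. of_real lam * cnj (cf m) * cf m)"
      by (subst Bochner_Integration.integral_sum) (auto simp: int_cf cf_def)
    also have "\<dots> = of_real (lam * (\<Sum>m\<in>N. (cmod (cf m))\<^sup>2))"
      by (simp add: sum_distrib_left complex_norm_square[symmetric] mult_ac)
    finally show ?thesis .
  qed
  have I2: "(LINT x|lborel. T x * cnj (T x)) = of_real (lam * (\<Sum>m\<in>N. (cmod (cf m))\<^sup>2))"
  proof -
    have "(LINT x|lborel. T x * cnj (T x)) =
        (LINT x|lborel. (\<Sum>m\<in>N. \<Sum>k\<in>N. of_real (lam^2) * cf m * cnj (cf k) *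
            (indicator S x * (ee (of_int m * lam * x) * cnj (ee (of_int k * lam * x))))))"
    proof (intro Bochner_Integration.integral_cong refl)
      fix x
      have ii: "(indicator S x :: complex) * indicator S x = indicator S x" by (simp add: indicator_def)
      have "T x * cnj (T x) = of_real (lam^2) * indicator S x * ((\<Sum>m\<in>N. cf m * ee (of_int m * lam * x)) * (\<Sum>k\<in>N. cnj (cf k) * cnj (ee (of_int k * lam * x))))"
        by (cases "x \<in> S") (simp_all add: T_def power2_eq_square mult_ac)
      also have "\<dots> = (\<Sum>m\<in>N. \<Sum>k\<in>N. of_real (lam^2) * cf m * cnj (cf k) *
            (indicator S x * (ee (of_int m * lam * x) * cnj (ee (of_int k * lam * x)))))"
        by (simp add: sum_product sum_distrib_left mult_ac, subst sum.swap, simp)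
      finally show "T x * cnj (T x) = (\<Sum>m\<in>N. \<Sum>k\<in>N. of_real (lam^2) * cf m * cnj (cf k) *
            (indicator S x * (ee (of_int m * lam * x) * cnj (ee (of_int k * lam * x)))))" .
    qed
    also have "\<dots> = (\<Sum>m\<in>N. \<Sum>k\<in>N. of_real (lam^2) * cf m * cnj (cf k) * (if m = k then 1/lam else 0))"
    proof -
      have ii: "integrable lborel (\<lambda>x. indicator S x * (ee (of_int m * lam * x) * cnj (ee (of_int k * lam * x))))" for m k :: int
        unfolding S_def by (rule intg_bdd[where B=1 and a=c and b="c+1/lam"], measurable) (auto simp: norm_mult indicator_def)
      show ?thesis
        by (simp add: Bochner_Integration.integral_sum Bochner_Integration.integrable_sum ii O)
    qed
    also have "\<dots> = of_real (lam * (\<Sum>m\<in>N. (cmod (cf m))\<^sup>2))"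
      using lam N by (simp add: sum_distrib_left complex_norm_square[symmetric] mult_ac power2_eq_square if_distrib sum.delta cong: if_cong)
    finally show ?thesis .
  qed
  have "0 \<le> (LINT x|lborel. (cmod (h x - T x))\<^sup>2)" by simp
  also have "\<dots> = (LINT x|lborel. (cmod (h x))\<^sup>2 - 2 * Re (h x * cnj (T x)) + Re (T x * cnj (T x)))"
    by (simp add: cmod_diff_sq)
  also have "\<dots> = (LINT x|lborel. (cmod (h x))\<^sup>2) - 2 * Re (LINT x|lborel. h x * cnj (T x)) + Re (LINT x|lborel. T x * cnj (T x))"
  proof -
    have i1: "integrable lborel (\<lambda>x. (cmod (h x))\<^sup>2)"
      by (rule intg_bdd[where B="B^2" and a=c and b="c+1/lam"]) (auto simp: hs power_mono hb)
    have i2: "integrable lborel (\<lambda>x. h x * cnj (T x))"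
      by (rule intg_bdd[where B="B*TB" and a=c and b="c+1/lam"]) (auto simp: hs norm_mult intro!: mult_mono hb Tb B0)
    have i3: "integrable lborel (\<lambda>x. T x * cnj (T x))"
      by (rule intg_bdd[where B="TB*TB" and a=c and b="c+1/lam"]) (auto simp: Ts norm_mult intro!: mult_mono Tb TB0)
    have ir2: "integrable lborel (\<lambda>x. 2 * Re (h x * cnj (T x)))"
      by (intro integrable_mult_right integrable_Re i2)
    have ir3: "integrable lborel (\<lambda>x. Re (T x * cnj (T x)))"
      by (intro integrable_Re i3)
    have "(LINT x|lborel. (cmod (h x))\<^sup>2 - 2 * Re (h x * cnj (T x)) + Re (T x * cnj (T x)))
       = (LINT x|lborel. (cmod (h x))\<^sup>2 - 2 * Re (h x * cnj (T x))) + (LINT x|lborel. Re (T x * cnj (T x)))"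
      by (rule Bochner_Integration.integral_add[OF Bochner_Integration.integrable_diff[OF i1 ir2] ir3])
    also have "(LINT x|lborel. (cmod (h x))\<^sup>2 - 2 * Re (h x * cnj (T x))) = 
        (LINT x|lborel. (cmod (h x))\<^sup>2) - (LINT x|lborel. 2 * Re (h x * cnj (T x)))"
      by (rule Bochner_Integration.integral_diff[OF i1 ir2])
    finally show ?thesis
      by (simp only: integral_mult_right_zero integral_Re[OF i2] integral_Re[OF i3])
  qed
  also have "\<dots> = (LINT x|lborel. (cmod (h x))\<^sup>2) - lam * (\<Sum>m\<in>N. (cmod (cf m))\<^sup>2)"
    unfolding I1 I2 by simp
  finally show ?thesis unfolding cf_def by simp
qed


lemma trans_inv:
  fixes g :: "real \<Rightarrow> 'a::{banach,second_countable_topology}"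
  shows "(LINT x|lborel. g (x + u)) = (LINT x|lborel. g x)"
  using lborel_integral_real_affine[of 1 g u] by (simp add: add.commute)

lemma refl_inv:
  fixes g :: "real \<Rightarrow> 'a::{banach,second_countable_topology}"
  shows "(LINT x|lborel. g (- x)) = (LINT x|lborel. g x)"
  using lborel_integral_real_affine[of "-1" g 0] by simp

locale bf =
  fixes f :: "real \<Rightarrow> complex" and M :: real
  assumes fm[measurable]: "f \<in> borel_measurable borel"
    and fb: "\<And>x. cmod (f x) \<le> M"
    and fs: "\<And>x. x \<notin> {0..1} \<Longrightarrow> f x = 0"
begin

lemma f_prod_zero: "f a \<noteq> 0 \<Longrightarrow> f (a + b) \<noteq> 0 \<Longrightarrow> a \<in> {0..1} \<and> a + b \<in> {0..1}"
  using fs by blast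

lemma f_prod_zero2: "\<not> (a \<in> {0..1} \<and> b \<in> {-1..1}) \<Longrightarrow> f a = 0 \<or> f (a + b) = 0"
proof (rule ccontr)
  assume a: "\<not> (a \<in> {0..1} \<and> b \<in> {-1..1})" and "\<not> (f a = 0 \<or> f (a + b) = 0)"
  then have "a \<in> {0..1} \<and> a + b \<in> {0..1}" using f_prod_zero by blast
  then show False using a by auto
qed

lemma M0: "0 \<le> M" using fb[of 0] norm_ge_zero order_trans by blast

definition "Q2 = (LINT x|lborel. (cmod (f x))^2)"
definition "Q4 = (LINT x|lborel. (cmod (f x))^4)"

lemma int_pow: "integrable lborel (\<lambda>x. (cmod (f x))^k)" if "k > 0"
  by (rule intg_bdd[where B="M^k" and a=0 and b=1]) (use that in \<open>auto simp: fs power_mono fb\<close>)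

lemma int_pow_shift: "integrable lborel (\<lambda>x. (cmod (f (x + u)))^k)" if "k > 0"
  using lborel_integrable_real_affine[OF int_pow[OF that], of 1 u] by (simp add: add.commute)

lemma Q2_nonneg: "0 \<le> Q2" unfolding Q2_def by simp
lemma Q4_nonneg: "0 \<le> Q4" unfolding Q4_def by simp

lemma int_prod: "integrable lborel (\<lambda>x. (cmod (f (x + u)))^k * (cmod (f x))^k)" if "k > 0"
  by (rule intg_bdd[where B="M^k * M^k" and a=0 and b=1])
     (use that M0 in \<open>auto simp: fs intro!: mult_mono power_mono fb\<close>)

lemma prod_bound: "(LINT x|lborel. cmod (f (x + u)) * cmod (f x)) \<le> Q2"
proof -
  have "(LINT x|lborel. cmod (f (x + u)) * cmod (f x)) \<le>
        (LINT x|lborel. ((cmod (f (x + u)))^2 + (cmod (f x))^2) / 2)"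
  proof (rule integral_mono)
    show "integrable lborel (\<lambda>x. cmod (f (x + u)) * cmod (f x))" using int_prod[where u=u and k=1] by simp
    show "integrable lborel (\<lambda>x. ((cmod (f (x + u)))^2 + (cmod (f x))^2) / 2)"
      by (intro integrable_divide Bochner_Integration.integrable_add int_pow int_pow_shift) auto
    fix x show "cmod (f (x + u)) * cmod (f x) \<le> ((cmod (f (x + u)))^2 + (cmod (f x))^2) / 2"
      using sum_squares_bound[of "cmod (f (x+u))" "cmod (f x)"] by simp
  qed
  also have "\<dots> = Q2"
    using trans_inv[of "\<lambda>x. (cmod (f x))^2" u]
    by (simp add: Q2_def int_pow int_pow_shift)
  finally show ?thesis .
qed

lemma prod4_bound: "(LINT x|lborel. (cmod (f (x + u)))^2 * (cmod (f x))^2) \<le> Q4"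
proof -
  have "(LINT x|lborel. (cmod (f (x + u)))^2 * (cmod (f x))^2) \<le>
        (LINT x|lborel. ((cmod (f (x + u)))^4 + (cmod (f x))^4) / 2)"
  proof (rule integral_mono)
    show "integrable lborel (\<lambda>x. (cmod (f (x + u)))^2 * (cmod (f x))^2)" using int_prod[where u=u and k=2] by simp
    show "integrable lborel (\<lambda>x. ((cmod (f (x + u)))^4 + (cmod (f x))^4) / 2)"
      by (intro integrable_divide Bochner_Integration.integrable_add int_pow int_pow_shift) auto
    fix x show "(cmod (f (x + u)))^2 * (cmod (f x))^2 \<le> ((cmod (f (x + u)))^4 + (cmod (f x))^4) / 2"
      using sum_squares_bound[of "(cmod (f (x+u)))^2" "(cmod (f x))^2"] by (simp add: power_mult[symmetric])
  qed
  also have "\<dots> = Q4"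
    using trans_inv[of "\<lambda>x. (cmod (f x))^4" u]
    by (simp add: Q4_def int_pow int_pow_shift)
  finally show ?thesis .
qed

lemma Q2_aux: "Q2 \<le> (Q4 / t + t) / 2" if t: "t > 0"
proof -
  have "Q2 \<le> (LINT x|lborel. ((cmod (f x))^4 / t + t * indicator {0..1} x) / 2)"
    unfolding Q2_def
  proof (rule integral_mono)
    show "integrable lborel (\<lambda>x. (cmod (f x))\<^sup>2)" by (rule int_pow) simp
    show "integrable lborel (\<lambda>x. ((cmod (f x))^4 / t + t * indicator {0..1} x) / 2)"
      by (intro integrable_divide Bochner_Integration.integrable_add int_pow integrable_mult_right) auto
    fix x show "(cmod (f x))\<^sup>2 \<le> ((cmod (f x))^4 / t + t * indicator {0..1} x) / 2"
    proof (cases "x \<in> {0..1}")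
      case True
      have "0 \<le> ((cmod (f x))^2 - t)^2" by simp
      then have "2 * t * (cmod (f x))^2 \<le> (cmod (f x))^4 + t^2"
        by (simp add: power2_eq_square algebra_simps power4_eq_xxxx)
      then show ?thesis using True t by (simp add: field_simps power2_eq_square)
    next
      case False then show ?thesis using fs[of x] by simp
    qed
  qed
  also have "\<dots> = (Q4 / t + t) / 2"
    by (simp add: Q4_def int_pow)
  finally show ?thesis .
qed

lemma Q2_le: "Q2 \<le> sqrt Q4"
proof (cases "Q4 > 0")
  case True
  have "Q2 \<le> (Q4 / sqrt Q4 + sqrt Q4) / 2" using Q2_aux[of "sqrt Q4"] True by simp
  also have "\<dots> = sqrt Q4" using True by (simp add: real_div_sqrt)
  finally show ?thesis .
next
  case False
  then have "Q4 = 0" using Q4_nonneg by simp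
  have "Q2 \<le> e" if "e > 0" for e using Q2_aux[of "2*e"] that \<open>Q4 = 0\<close> by simp
  then have "Q2 \<le> 0" by (meson dense not_le)
  then show ?thesis using \<open>Q4 = 0\<close> by simp
qed


definition W where "W n m \<eta> u = f (\<eta> + u) * cnj (f \<eta>) * ee (- (of_int n * u + of_int m * u * (2 * \<eta> + u)))"
  for n m :: int and \<eta> u :: real
definition Phi where "Phi n m u = (LINT \<eta>|lborel. W n m \<eta> u)"
definition Psi where "Psi m u = (LINT \<eta>|lborel. f (\<eta> + u) * cnj (f \<eta>) * ee (- (of_int m * u * (2 * \<eta> + u))))"
definition aa where "aa n m = (LINT x|lborel. f x * ee (- (of_int n * x + of_int m * x^2)))"
definition P where "P n m = (LINT u|lborel. indicator {0<..} u * Phi n m u)"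

lemma W_meas1[measurable]: "(\<lambda>(u, \<eta>). W n m \<eta> u) \<in> borel_measurable (lborel \<Otimes>\<^sub>M lborel)"
  unfolding W_def by measurable

lemma W_meas2[measurable]: "(\<lambda>(\<eta>, u). W n m \<eta> u) \<in> borel_measurable (lborel \<Otimes>\<^sub>M lborel)"
  unfolding W_def by measurable

lemma Phi_meas[measurable]: "Phi n m \<in> borel_measurable lborel"
  unfolding Phi_def by measurable

lemma norm_W: "cmod (W n m \<eta> u) = cmod (f (\<eta> + u)) * cmod (f \<eta>)"
  by (simp add: W_def norm_mult)

lemma W_zero: "u > 1 \<or> u < -1 \<Longrightarrow> W n m \<eta> u = 0"
proof -
  assume u: "u > 1 \<or> u < -1"
  have "f \<eta> = 0 \<or> f (\<eta> + u) = 0"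
  proof (cases "\<eta> \<in> {0..1}")
    case True then have "\<eta> + u \<notin> {0..1}" using u by auto
    then show ?thesis using fs by blast
  qed (use fs in blast)
  then show ?thesis by (auto simp: W_def)
qed

lemma Phi_zero: "u > 1 \<or> u < -1 \<Longrightarrow> Phi n m u = 0"
  by (simp add: Phi_def W_zero)

lemma Phi_bound: "cmod (Phi n m u) \<le> Q2"
proof -
  have "cmod (Phi n m u) \<le> (LINT \<eta>|lborel. cmod (W n m \<eta> u))"
    unfolding Phi_def by (rule integral_norm_bound)
  also have "\<dots> \<le> Q2" unfolding norm_W by (rule prod_bound)
  finally show ?thesis .
qed

lemma int_Phi: "integrable lborel (\<lambda>u. g u * Phi n m u)"
  if "g \<in> borel_measurable lborel" "\<And>u. cmod (g u) \<le> 1"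
proof (rule intg_bdd[where B=Q2 and a="-1" and b=1])
  show "(\<lambda>u. g u * Phi n m u) \<in> borel_measurable lborel" using that(1) by measurable
  fix u
  have "cmod (g u) * cmod (Phi n m u) \<le> 1 * Q2"
    by (rule mult_mono) (simp_all add: that Phi_bound Q2_nonneg)
  then show "cmod (g u * Phi n m u) \<le> Q2" by (simp add: norm_mult)
  show "u \<notin> {- 1..1} \<Longrightarrow> g u * Phi n m u = 0" by (auto simp: Phi_zero)
qed

lemma int_W: "integrable (lborel \<Otimes>\<^sub>M lborel) (\<lambda>(\<eta>, u). W n m \<eta> u)"
proof (rule integrableI_bounded_set[where A="{0..1} \<times> {-1..1}" and B="M*M"])
  show "{0..1::real} \<times> {-1..1::real} \<in> sets (lborel \<Otimes>\<^sub>M lborel)" by (intro pair_measureI) (simp_all add: atLeastAtMost_borel)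
  show "(\<lambda>(\<eta>, u). W n m \<eta> u) \<in> borel_measurable (lborel \<Otimes>\<^sub>M lborel)" by measurable
  show "emeasure (lborel \<Otimes>\<^sub>M lborel) ({0..1::real} \<times> {-1..1::real}) < \<infinity>"
    by (simp add: lborel.emeasure_pair_measure_Times ennreal_mult_less_top)
  show "AE x in lborel \<Otimes>\<^sub>M lborel. x \<in> {0..1} \<times> {- 1..1} \<longrightarrow> cmod (case x of (\<eta>, u) \<Rightarrow> W n m \<eta> u) \<le> M * M"
    by (intro AE_I2) (auto simp: norm_W intro!: mult_mono fb M0)
  show "AE x in lborel \<Otimes>\<^sub>M lborel. x \<notin> {0..1} \<times> {- 1..1} \<longrightarrow> (case x of (\<eta>, u) \<Rightarrow> W n m \<eta> u) = 0"
  proof (intro AE_I2 impI)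
    fix x :: "real \<times> real" assume "x \<notin> {0..1} \<times> {- 1..1}"
    then show "(case x of (\<eta>, u) \<Rightarrow> W n m \<eta> u) = 0"
      using f_prod_zero2[of "fst x" "snd x"] by (cases x) (auto simp: W_def)
  qed
qed

lemma ee_mult_eq: "a + b = c \<Longrightarrow> ee a * ee b = ee c"
  by (simp add: ee_add[symmetric])

lemma aa_Phi: "of_real ((cmod (aa n m))^2) = (LINT u|lborel. Phi n m u)"
proof -
  have cnja: "cnj (aa n m) = (LINT \<eta>|lborel. cnj (f \<eta>) * ee (of_int n * \<eta> + of_int m * \<eta>^2))"
  proof -
    have "cnj (aa n m) = (LINT x|lborel. cnj (f x * ee (- (of_int n * x + of_int m * x^2))))"
      by (simp only: aa_def Bochner_Integration.integral_cnj)
    also have "\<dots> = (LINT \<eta>|lborel. cnj (f \<eta>) * ee (of_int n * \<eta> + of_int m * \<eta>^2))"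
      by (intro Bochner_Integration.integral_cong refl) (simp add: ee_cnj add.commute)
    finally show ?thesis .
  qed
  have inner: "aa n m * (cnj (f \<eta>) * ee (of_int n * \<eta> + of_int m * \<eta>^2)) = (LINT u|lborel. W n m \<eta> u)" for \<eta>
  proof -
    have "aa n m * (cnj (f \<eta>) * ee (of_int n * \<eta> + of_int m * \<eta>^2)) =
       (LINT \<xi>|lborel. f \<xi> * ee (- (of_int n * \<xi> + of_int m * \<xi>^2)) * (cnj (f \<eta>) * ee (of_int n * \<eta> + of_int m * \<eta>^2)))"
      unfolding aa_def by simp
    also have "\<dots> = (LINT u|lborel. f (u + \<eta>) * ee (- (of_int n * (u + \<eta>) + of_int m * (u + \<eta>)^2)) * (cnj (f \<eta>) * ee (of_int n * \<eta> + of_int m * \<eta>^2)))"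
      by (rule trans_inv[symmetric])
    also have "\<dots> = (LINT u|lborel. W n m \<eta> u)"
    proof (intro Bochner_Integration.integral_cong refl)
      fix u
      have "ee (- (of_int n * (u + \<eta>) + of_int m * (u + \<eta>)^2)) * ee (of_int n * \<eta> + of_int m * \<eta>^2)
          = ee (- (of_int n * u + of_int m * u * (2 * \<eta> + u)))"
        by (rule ee_mult_eq) (simp add: power2_eq_square algebra_simps)
      then show "f (u + \<eta>) * ee (- (of_int n * (u + \<eta>) + of_int m * (u + \<eta>)^2)) * (cnj (f \<eta>) * ee (of_int n * \<eta> + of_int m * \<eta>^2)) = W n m \<eta> u"
        unfolding W_def by (simp add: add.commute mult_ac)
    qed
    finally show ?thesis .
  qed
  have "of_real ((cmod (aa n m))^2) = aa n m * cnj (aa n m)" by (rule complex_norm_square)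
  also have "\<dots> = (LINT \<eta>|lborel. aa n m * (cnj (f \<eta>) * ee (of_int n * \<eta> + of_int m * \<eta>^2)))"
    unfolding cnja by simp
  also have "\<dots> = (LINT \<eta>|lborel. LINT u|lborel. W n m \<eta> u)" unfolding inner ..
  also have "\<dots> = (LINT u|lborel. LINT \<eta>|lborel. W n m \<eta> u)"
    using lborel_pair.Fubini_integral[of "\<lambda>\<eta> u. W n m \<eta> u", OF int_W] by simp
  finally show ?thesis unfolding Phi_def .
qed

lemma Phi_refl: "Phi n m (- u) = cnj (Phi n m u)"
proof -
  have "Phi n m (- u) = (LINT \<eta>|lborel. W n m (\<eta> + u) (- u))"
    unfolding Phi_def by (rule trans_inv[symmetric])
  also have "\<dots> = (LINT \<eta>|lborel. cnj (W n m \<eta> u))"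
  proof (intro Bochner_Integration.integral_cong refl)
    fix \<eta>
    have "ee (- (of_int n * - u + of_int m * - u * (2 * (\<eta> + u) + - u))) = cnj (ee (- (of_int n * u + of_int m * u * (2 * \<eta> + u))))"
      by (simp add: ee_cnj algebra_simps)
    then show "W n m (\<eta> + u) (- u) = cnj (W n m \<eta> u)" unfolding W_def by simp
  qed
  also have "\<dots> = cnj (Phi n m u)" unfolding Phi_def by simp
  finally show ?thesis .
qed

lemma aa_P: "(cmod (aa n m))^2 = 2 * Re (P n m)"
proof -
  have i1: "integrable lborel (\<lambda>u. indicator {0<..} u * Phi n m u)"
    by (rule int_Phi) (auto simp: indicator_def)
  have i2: "integrable lborel (\<lambda>u. indicator {..<0} u * Phi n m u)"
    by (rule int_Phi) (auto simp: indicator_def)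
  have "(LINT u|lborel. Phi n m u) = (LINT u|lborel. indicator {0<..} u * Phi n m u + indicator {..<0} u * Phi n m u)"
  proof (rule integral_cong_AE)
    show "AE u in lborel. Phi n m u = indicator {0<..} u * Phi n m u + indicator {..<0} u * Phi n m u"
      using AE_lborel_singleton[of 0] by eventually_elim (auto simp: indicator_def)
  qed measurable
  also have "\<dots> = P n m + (LINT u|lborel. indicator {..<0} u * Phi n m u)"
    unfolding P_def using i1 i2 by simp
  also have "(LINT u|lborel. indicator {..<0} u * Phi n m u) = (LINT u|lborel. indicator {..<0} (-u) * Phi n m (-u))"
    by (rule refl_inv[symmetric])
  also have "\<dots> = (LINT u|lborel. cnj (indicator {0<..} u * Phi n m u))"
    by (intro Bochner_Integration.integral_cong refl) (auto simp: Phi_refl indicator_def)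
  also have "\<dots> = cnj (P n m)" unfolding P_def by (simp only: Bochner_Integration.integral_cnj)
  finally have "of_real ((cmod (aa n m))^2) = P n m + cnj (P n m)" using aa_Phi by simp
  then have "Re (complex_of_real ((cmod (aa n m))^2)) = Re (P n m + cnj (P n m))" by (rule arg_cong)
  then show ?thesis by simp
qed

end


context bf begin

definition II :: "nat \<Rightarrow> real set" where "II j = {(1/2)^(Suc j) <.. (1/2)^j}"
definition Bj where "Bj n m j = (LINT u|lborel. indicator (II j) u * Phi n m u)"

lemma P_01: "P n m = (LINT u|lborel. indicator {0<..1} u * Phi n m u)"
  unfolding P_def
  by (intro Bochner_Integration.integral_cong refl) (auto simp: indicator_def Phi_zero)

lemma P_split: "P n m = (\<Sum>j<J. Bj n m j) + (LINT u|lborel. indicator {0<..(1/2)^J} u * Phi n m u)"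
proof (induction J)
  case 0
  then show ?case by (simp add: P_01)
next
  case (Suc J)
  have "(LINT u|lborel. indicator {0<..(1/2::real)^J} u * Phi n m u) =
        (LINT u|lborel. indicator (II J) u * Phi n m u + indicator {0<..(1/2::real)^Suc J} u * Phi n m u)"
  proof (intro Bochner_Integration.integral_cong refl)
    fix u :: real
    have ind: "0 < y \<Longrightarrow> y < x \<Longrightarrow> indicator {0<..x} u * z = indicator {y<..x} u * z + indicator {0<..y} u * (z::complex)" for x y :: real and z
      by (auto simp: indicator_def)
    have "(1/2::real)^Suc J < (1/2)^J" "0 < (1/2::real)^Suc J" by simp_all
    from ind[OF this(2,1)] show "indicator {0<..(1/2::real)^J} u * Phi n m u = indicator (II J) u * Phi n m u + indicator {0<..(1/2::real)^Suc J} u * Phi n m u"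
      unfolding II_def .
  qed
  also have "\<dots> = Bj n m J + (LINT u|lborel. indicator {0<..(1/2::real)^Suc J} u * Phi n m u)"
    unfolding Bj_def by (intro Bochner_Integration.integral_add int_Phi) (auto simp: indicator_def II_def)
  finally show ?case using Suc.IH by simp
qed

lemma Ioc_bound: "a \<le> b \<Longrightarrow> cmod (LINT u|lborel. indicator {a<..b} u * Phi n m u) \<le> (b - a) * Q2"
proof -
  assume ab: "a \<le> b"
  have "cmod (LINT u|lborel. indicator {a<..b} u * Phi n m u) \<le> (LINT u|lborel. cmod (indicator {a<..b} u * Phi n m u))"
    by (rule integral_norm_bound)
  also have "\<dots> \<le> (LINT u|lborel. indicator {a<..b} u * Q2)"
  proof (rule integral_mono)
    show "integrable lborel (\<lambda>u. cmod (indicator {a<..b} u * Phi n m u))"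
      by (intro integrable_norm int_Phi) (auto simp: indicator_def)
    show "integrable lborel (\<lambda>u. indicator {a<..b} u * Q2)"
      using ab by (intro integrable_mult_left integrable_real_indicator) auto
    fix u show "cmod (indicator {a<..b} u * Phi n m u) \<le> indicator {a<..b} u * Q2"
      by (auto simp: indicator_def Phi_bound)
  qed
  also have "\<dots> = (b - a) * Q2" using ab by simp
  finally show ?thesis .
qed

lemma Bj_bound: "cmod (Bj n m j) \<le> (1/2)^(Suc j) * Q2"
proof -
  have "cmod (Bj n m j) \<le> ((1/2)^j - (1/2)^(Suc j)) * Q2"
    unfolding Bj_def II_def by (rule Ioc_bound) (simp del: power_Suc)
  also have "(1/2::real)^j - (1/2)^(Suc j) = (1/2)^(Suc j)" by simp
  finally show ?thesis .
qed

lemma Bj_tendsto: "(\<lambda>J. \<Sum>j<J. Bj n m j) \<longlonglongrightarrow> P n m"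
proof -
  define R where "R J = (LINT u|lborel. indicator {0<..(1/2::real)^J} u * Phi n m u)" for J
  have eq: "(\<Sum>j<J. Bj n m j) = P n m - R J" for J using P_split[of n m J] by (simp add: R_def)
  have "R \<longlonglongrightarrow> 0"
  proof (rule tendsto_norm_zero_cancel, rule Lim_null_comparison)
    show "\<forall>\<^sub>F J in sequentially. norm (norm (R J)) \<le> (1/2)^J * Q2"
      using Ioc_bound[of 0 "(1/2)^J" n m for J] by (auto simp: R_def)
    show "(\<lambda>J. (1/2::real)^J * Q2) \<longlonglongrightarrow> 0"
      by (intro tendsto_mult_left_zero LIMSEQ_power_zero) auto
  qed
  then have "(\<lambda>J. P n m - R J) \<longlonglongrightarrow> P n m - 0" by (intro tendsto_diff tendsto_const)
  then show ?thesis unfolding eq by simp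
qed


lemma Psi_meas[measurable]: "Psi m \<in> borel_measurable lborel"
  unfolding Psi_def by measurable

lemma ee_diff: "ee (a - b) = ee a * ee (- b)"
  using ee_add[of a "-b"] by simp

lemma Phi_Psi: "Phi n m u = ee (- (of_int n * u)) * Psi m u"
proof -
  have "Phi n m u = (LINT \<eta>|lborel. ee (- (of_int n * u)) * (f (\<eta> + u) * cnj (f \<eta>) * ee (- (of_int m * u * (2 * \<eta> + u)))))"
    unfolding Phi_def W_def
    by (intro Bochner_Integration.integral_cong refl) (simp add: ee_diff mult_ac)
  then show ?thesis unfolding Psi_def by simp
qed

lemma Psi_bound: "cmod (Psi m u) \<le> Q2"
proof -
  have "cmod (Psi m u) \<le> (LINT \<eta>|lborel. cmod (f (\<eta> + u) * cnj (f \<eta>) * ee (- (of_int m * u * (2 * \<eta> + u)))))"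
    unfolding Psi_def by (rule integral_norm_bound)
  also have "\<dots> = (LINT \<eta>|lborel. cmod (f (\<eta> + u)) * cmod (f \<eta>))" by (simp add: norm_mult)
  also have "\<dots> \<le> Q2" by (rule prod_bound)
  finally show ?thesis .
qed

lemma II_sub: "u \<in> II j \<Longrightarrow> 0 < u \<and> u \<le> 1 \<and> 1 < 2 * u * 2^j"
proof -
  assume u: "u \<in> II j"
  have a: "(1/2::real)^Suc j < u" "u \<le> (1/2)^j" using u by (auto simp: II_def)
  have "(0::real) < (1/2)^Suc j" by simp
  moreover have "(1/2::real)^j \<le> 1" by (simp add: power_le_one)
  moreover have "1 < 2 * u * 2^j"
  proof -
    have "(1/2::real)^Suc j = 1 / (2 * 2^j)" by (simp add: power_one_over)
    with a(1) have "1 / (2 * 2^j) < u" by simp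
    then show ?thesis by (simp add: field_simps)
  qed
  ultimately show ?thesis using a by auto
qed

lemma Psi_l2: "u \<in> II j \<Longrightarrow> finite N \<Longrightarrow> (\<Sum>m\<in>N. (cmod (Psi m u))^2) \<le> 2^j * Q4"
proof -
  assume u: "u \<in> II j" and N: "finite N"
  from II_sub[OF u] have u0: "0 < u" and u1: "u \<le> 1" and uj: "1 < 2 * u * 2^j" by auto
  define h where "h \<eta> = f (\<eta> + u) * cnj (f \<eta>)" for \<eta>
  have hm[measurable]: "h \<in> borel_measurable lborel" unfolding h_def by measurable
  have hb: "norm (h \<eta>) \<le> M * M" for \<eta> unfolding h_def norm_mult by (auto intro!: mult_mono fb M0)
  have hs: "h \<eta> = 0" if "\<eta> \<notin> {0..0 + 1/(2*u)}" for \<eta>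
  proof (cases "f \<eta> = 0")
    case False
    then have "0 \<le> \<eta>" "\<eta> \<le> 1" using fs by auto
    with that have "\<eta> > 1/(2*u)" by auto
    moreover have "1 < 1/(2*u) + u"
    proof -
      have "0 \<le> (2*u - 1)^2" by simp
      then have "2 * u < 1 + 2 * u * u" by (simp add: power2_eq_square algebra_simps)
      then show ?thesis using u0 by (simp add: field_simps)
    qed
    ultimately have "\<eta> + u \<notin> {0..1}" by auto
    then show ?thesis using fs by (simp add: h_def)
  qed (simp add: h_def)
  have eqP: "cmod (Psi m u) = cmod (LINT \<eta>|lborel. h \<eta> * ee (- (of_int m * (2 * u) * \<eta>)))" for m :: int
  proof -
    have "Psi m u = (LINT \<eta>|lborel. ee (- (of_int m * u^2)) * (h \<eta> * ee (- (of_int m * (2 * u) * \<eta>))))"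
      unfolding Psi_def h_def
      by (intro Bochner_Integration.integral_cong refl)
         (simp add: ee_diff power2_eq_square algebra_simps)
    then show ?thesis by (simp add: norm_mult)
  qed
  have "2 * u * (\<Sum>m\<in>N. (cmod (Psi m u))^2) \<le> (LINT \<eta>|lborel. (cmod (h \<eta>))^2)"
    unfolding eqP using bessel[of "2*u" N h "M*M" 0] u0 N hm hb hs by simp
  also have "\<dots> = (LINT \<eta>|lborel. (cmod (f (\<eta> + u)))^2 * (cmod (f \<eta>))^2)"
    unfolding h_def by (simp add: norm_mult power_mult_distrib)
  also have "\<dots> \<le> Q4" by (rule prod4_bound)
  finally have A: "2 * u * (\<Sum>m\<in>N. (cmod (Psi m u))^2) \<le> Q4" .
  have S0: "0 \<le> (\<Sum>m\<in>N. (cmod (Psi m u))^2)" by (simp add: sum_nonneg)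
  have "(\<Sum>m\<in>N. (cmod (Psi m u))^2) \<le> (2 * u * 2^j) * (\<Sum>m\<in>N. (cmod (Psi m u))^2)"
    using uj S0 by (simp add: mult_le_cancel_right1)
  also have "\<dots> = 2^j * (2 * u * (\<Sum>m\<in>N. (cmod (Psi m u))^2))" by simp
  also have "\<dots> \<le> 2^j * Q4" using A by (intro mult_left_mono) auto
  finally show ?thesis .
qed

lemma Bj_l2: "finite N \<Longrightarrow> (\<Sum>(n,m)\<in>N. (cmod (Bj n m j))^2) \<le> Q4 / 2"
proof -
  assume N: "finite N"
  define N1 where "N1 = fst ` N"
  define N2 where "N2 = snd ` N"
  have fin: "finite N1" "finite N2" using N by (auto simp: N1_def N2_def)
  have sub: "N \<subseteq> N1 \<times> N2" by (force simp: N1_def N2_def)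
  have indPsi_meas[measurable]: "(\<lambda>u. indicator (II j) u * Psi m u) \<in> borel_measurable lborel" for m
    unfolding II_def by measurable
  have "(\<Sum>(n,m)\<in>N. (cmod (Bj n m j))^2) \<le> (\<Sum>(n,m)\<in>N1 \<times> N2. (cmod (Bj n m j))^2)"
    by (rule sum_mono2) (use fin sub in auto)
  also have "\<dots> = (\<Sum>m\<in>N2. \<Sum>n\<in>N1. (cmod (Bj n m j))^2)"
    by (simp add: sum.cartesian_product[symmetric] sum.swap[of _ N1])
  also have "\<dots> \<le> (\<Sum>m\<in>N2. LINT u|lborel. (cmod (indicator (II j) u * Psi m u))^2)"
  proof (rule sum_mono)
    fix m
    have eqB: "Bj n m j = (LINT u|lborel. indicator (II j) u * Psi m u * ee (- (of_int n * 1 * u)))" for n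
      unfolding Bj_def by (intro Bochner_Integration.integral_cong refl) (simp add: Phi_Psi mult_ac)
    have b: "norm (indicator (II j) u * Psi m u) \<le> Q2" for u
      by (auto simp: indicator_def Psi_bound Q2_nonneg)
    have s: "indicator (II j) u * Psi m u = 0" if "u \<notin> {0..0 + 1/1}" for u
      using that II_sub[of u j] by (auto simp: indicator_def)
    show "(\<Sum>n\<in>N1. (cmod (Bj n m j))^2) \<le> (LINT u|lborel. (cmod (indicator (II j) u * Psi m u))^2)"
      unfolding eqB using bessel[of 1 N1 "\<lambda>u. indicator (II j) u * Psi m u" Q2 0, OF _ fin(1) indPsi_meas b s] by simp
  qed
  also have "\<dots> = (LINT u|lborel. (\<Sum>m\<in>N2. (cmod (indicator (II j) u * Psi m u))^2))"
  proof (rule Bochner_Integration.integral_sum[symmetric])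
    fix m
    show "integrable lborel (\<lambda>u. (cmod (indicator (II j) u * Psi m u))^2)"
    proof (rule intg_bdd[where B="Q2^2" and a=0 and b=1])
      show "(\<lambda>u. (cmod (indicator (II j) u * Psi m u))^2) \<in> borel_measurable lborel" by measurable
      fix u
      show "norm ((cmod (indicator (II j) u * Psi m u))^2) \<le> Q2^2"
        by (auto simp: indicator_def Psi_bound Q2_nonneg intro!: power_mono)
      show "u \<notin> {0..1} \<Longrightarrow> (cmod (indicator (II j) u * Psi m u))^2 = 0"
        using II_sub[of u j] by (auto simp: indicator_def)
    qed
  qed
  also have "\<dots> \<le> (LINT u|lborel. indicator (II j) u * (2^j * Q4))"
  proof (rule integral_mono)
    show "integrable lborel (\<lambda>u. \<Sum>m\<in>N2. (cmod (indicator (II j) u * Psi m u))^2)"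
    proof (rule Bochner_Integration.integrable_sum)
      fix m
      show "integrable lborel (\<lambda>u. (cmod (indicator (II j) u * Psi m u))^2)"
      proof (rule intg_bdd[where B="Q2^2" and a=0 and b=1])
        show "(\<lambda>u. (cmod (indicator (II j) u * Psi m u))^2) \<in> borel_measurable lborel" by measurable
        fix u
        show "norm ((cmod (indicator (II j) u * Psi m u))^2) \<le> Q2^2"
          by (auto simp: indicator_def Psi_bound Q2_nonneg intro!: power_mono)
        show "u \<notin> {0..1} \<Longrightarrow> (cmod (indicator (II j) u * Psi m u))^2 = 0"
          using II_sub[of u j] by (auto simp: indicator_def)
      qed
    qed
    show "integrable lborel (\<lambda>u. indicator (II j) u * (2^j * Q4))"
      unfolding II_def by (intro integrable_mult_left integrable_real_indicator) auto
    fix u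
    show "(\<Sum>m\<in>N2. (cmod (indicator (II j) u * Psi m u))^2) \<le> indicator (II j) u * (2^j * Q4)"
      using Psi_l2[of u j N2] fin by (auto simp: indicator_def)
  qed
  also have "\<dots> = 2^j * Q4 * ((1/2)^j - (1/2)^Suc j)"
    unfolding II_def by (simp del: power_Suc)
  also have "\<dots> = Q4 / 2" by (simp add: power_one_over field_simps)
  finally show ?thesis .
qed

end


lemma power_mean_pos:
  fixes x w :: "nat \<Rightarrow> real" and s :: real and A :: "nat set"
  assumes s: "s \<ge> 1" and A: "finite A" "A \<noteq> {}" and x: "\<And>j. j \<in> A \<Longrightarrow> x j > 0"
    and w: "\<And>j. j \<in> A \<Longrightarrow> w j > 0" and ws: "(\<Sum>j\<in>A. w j) \<le> 1"
  shows "(\<Sum>j\<in>A. x j) powr s \<le> (\<Sum>j\<in>A. w j powr (1 - s) * x j powr s)"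
proof -
  define W where "W = (\<Sum>j\<in>A. w j)"
  have W0: "W > 0" unfolding W_def using A w by (intro sum_pos) auto
  define a where "a j = w j / W" for j
  define y where "y j = x j / w j" for j
  have asum: "(\<Sum>j\<in>A. a j) = 1" using W0 by (simp add: a_def W_def sum_divide_distrib[symmetric])
  have xs: "(\<Sum>j\<in>A. x j) = W * (\<Sum>j\<in>A. a j *\<^sub>R y j)"
    using W0 w by (simp add: a_def y_def sum_distrib_left, intro sum.cong) (auto, metis less_irrefl)
  have J: "(\<Sum>j\<in>A. a j *\<^sub>R y j) powr s \<le> (\<Sum>j\<in>A. a j * y j powr s)"
    by (rule convex_on_sum[OF A powr_convex[OF s] asum])
       (use W0 w x in \<open>auto simp: a_def y_def intro!: divide_nonneg_pos less_imp_le\<close>)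
  have "(\<Sum>j\<in>A. x j) powr s = W powr s * (\<Sum>j\<in>A. a j *\<^sub>R y j) powr s"
    unfolding xs by (simp add: powr_mult)
  also have "\<dots> \<le> W powr s * (\<Sum>j\<in>A. a j * y j powr s)"
    using J by (intro mult_left_mono) auto
  also have "\<dots> = W powr (s - 1) * (\<Sum>j\<in>A. w j * y j powr s)"
  proof -
    have "W powr s = W powr (s - 1) * W" using powr_add[of W "s-1" 1] W0 by simp
    then show ?thesis using W0 by (simp add: a_def sum_distrib_left sum_divide_distrib[symmetric] mult_ac, simp add: sum_distrib_left[symmetric])
  qed
  also have "\<dots> \<le> 1 * (\<Sum>j\<in>A. w j * y j powr s)"
  proof (rule mult_right_mono)
    show "W powr (s - 1) \<le> 1" using W0 ws s unfolding W_def by (intro powr_le1) auto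
    show "0 \<le> (\<Sum>j\<in>A. w j * y j powr s)" using w by (intro sum_nonneg mult_nonneg_nonneg) (simp_all add: less_imp_le)
  qed
  also have "\<dots> = (\<Sum>j\<in>A. w j powr (1 - s) * x j powr s)"
  proof -
    have "w j * y j powr s = w j powr (1 - s) * x j powr s" if "j \<in> A" for j
    proof -
      have "w j * y j powr s = w j powr 1 * (x j powr s / w j powr s)"
        using w[OF that] by (simp add: y_def powr_divide)
      also have "\<dots> = w j powr (1 - s) * x j powr s"
        using w[OF that] by (simp add: powr_diff)
      finally show ?thesis .
    qed
    then show ?thesis by simp
  qed
  finally show ?thesis .
qed

lemma power_mean:
  fixes x w :: "nat \<Rightarrow> real" and s :: real and A :: "nat set"
  assumes s: "s \<ge> 1" and A: "finite A" and x: "\<And>j. j \<in> A \<Longrightarrow> x j \<ge> 0"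
    and w: "\<And>j. j \<in> A \<Longrightarrow> w j > 0" and ws: "(\<Sum>j\<in>A. w j) \<le> 1"
  shows "(\<Sum>j\<in>A. x j) powr s \<le> (\<Sum>j\<in>A. w j powr (1 - s) * x j powr s)"
proof -
  define A' where "A' = {j\<in>A. x j > 0}"
  have A'A: "A' \<subseteq> A" by (auto simp: A'_def)
  have fin: "finite A'" using A by (auto simp: A'_def)
  have sx: "(\<Sum>j\<in>A. x j) = (\<Sum>j\<in>A'. x j)"
    by (rule sum.mono_neutral_right[OF A A'A]) (use x in \<open>force simp: A'_def\<close>)
  have rhs: "(\<Sum>j\<in>A'. w j powr (1 - s) * x j powr s) \<le> (\<Sum>j\<in>A. w j powr (1 - s) * x j powr s)"
    by (rule sum_mono2[OF A A'A]) auto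
  show ?thesis
  proof (cases "A' = {}")
    case True then show ?thesis using sx by (simp add: sum_nonneg)
  next
    case False
    have "(\<Sum>j\<in>A'. x j) powr s \<le> (\<Sum>j\<in>A'. w j powr (1 - s) * x j powr s)"
    proof (rule power_mean_pos[OF s fin False])
      show "\<And>j. j \<in> A' \<Longrightarrow> 0 < x j" by (auto simp: A'_def)
      show "\<And>j. j \<in> A' \<Longrightarrow> 0 < w j" using w A'A by auto
      show "(\<Sum>j\<in>A'. w j) \<le> 1"
        using ws sum_mono2[OF A A'A, of w] w by (auto intro: less_imp_le order_trans)
    qed
    then show ?thesis using sx rhs by simp
  qed
qed

lemma pow_powr: "0 < x \<Longrightarrow> (x ^ j) powr a = (x powr a) ^ j" for x a :: real
  by (simp add: powr_realpow[symmetric] powr_powr powr_power mult.commute)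

definition th :: "real \<Rightarrow> real" where "th s = 2 powr (- ((s - 2) / (2 * (s - 1))))"
definition wt :: "real \<Rightarrow> nat \<Rightarrow> real" where "wt s j = (1 - th s) * th s ^ j"
definition tm :: "real \<Rightarrow> nat \<Rightarrow> real" where
  "tm s j = wt s j powr (1 - s) * ((1/2)^(Suc j)) powr (s - 2)"
definition Gc :: "real \<Rightarrow> real" where "Gc s = suminf (tm s)"

lemma th_bounds: "s > 2 \<Longrightarrow> 0 < th s \<and> th s < 1"
  unfolding th_def by (auto intro!: powr_less_one divide_pos_pos)

lemma wt_pos: "s > 2 \<Longrightarrow> wt s j > 0"
  using th_bounds[of s] by (simp add: wt_def)

lemma wt_sum: "s > 2 \<Longrightarrow> (\<Sum>j<J. wt s j) \<le> 1"
proof -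
  assume s: "s > 2"
  have "(\<Sum>j<J. wt s j) = 1 - th s ^ J"
    unfolding wt_def sum_distrib_left[symmetric] using th_bounds[OF s]
    by (simp add: one_diff_power_eq[symmetric] mult.commute)
  then show ?thesis using th_bounds[OF s] by simp
qed

lemma tm_eq: "s > 2 \<Longrightarrow> tm s j = ((1 - th s) powr (1 - s) * 2 powr (- (s - 2))) * (2 powr (- (s - 2) / 2)) ^ j"
proof -
  assume s: "s > 2"
  have t: "0 < th s" "th s < 1" using th_bounds[OF s] by auto
  have e: "- ((s - 2) / (2 * (s - 1))) * (1 - s) = (s - 2) / 2"
  proof -
    define q where "q = (s - 2) / (2 * (s - 1))"
    have "s - 1 \<noteq> 0" using s by simp
    then have "q * (s - 1) = (s - 2) / 2" unfolding q_def by (simp add: field_simps)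
    moreover have "- q * (1 - s) = q * (s - 1)" by (simp add: algebra_simps)
    ultimately show ?thesis unfolding q_def by simp
  qed
  have a: "th s powr (1 - s) = 2 powr ((s - 2) / 2)"
    unfolding th_def powr_powr e ..
  have b: "((1/2::real)^(Suc j)) powr (s - 2) = (2 powr (- (s - 2))) ^ Suc j"
  proof -
    have h: "(1/2::real) powr (s - 2) = 2 powr (- (s - 2))"
      by (simp only: powr_minus powr_divide) (simp add: inverse_eq_divide)
    have "((1/2::real)^(Suc j)) powr (s - 2) = ((1/2) powr (s - 2)) ^ Suc j"
      by (rule pow_powr) simp
    then show ?thesis unfolding h .
  qed
  have "tm s j = (1 - th s) powr (1 - s) * (th s powr (1 - s)) ^ j * (2 powr (- (s - 2))) ^ Suc j"
    unfolding tm_def wt_def b using t by (simp add: powr_mult pow_powr)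
  also have "\<dots> = ((1 - th s) powr (1 - s) * 2 powr (- (s - 2))) * (2 powr ((s - 2) / 2) * 2 powr (- (s - 2))) ^ j"
    unfolding a by (simp add: power_mult_distrib mult_ac)
  also have "2 powr ((s - 2) / 2) * 2 powr (- (s - 2)) = (2::real) powr (- (s - 2) / 2)"
    by (simp add: powr_add[symmetric], rule arg_cong[where f="\<lambda>x. 2 powr x"], simp add: field_simps)
  finally show ?thesis .
qed

lemma tm_summable: "s > 2 \<Longrightarrow> summable (tm s)"
proof -
  assume s: "s > 2"
  have "summable (\<lambda>j. ((1 - th s) powr (1 - s) * 2 powr (- (s - 2))) * (2 powr (- (s - 2) / 2)) ^ j)"
    using s by (intro summable_mult summable_geometric) (auto intro!: powr_less_one)
  moreover have "tm s = (\<lambda>j. ((1 - th s) powr (1 - s) * 2 powr (- (s - 2))) * (2 powr (- (s - 2) / 2)) ^ j)"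
    by (rule ext) (rule tm_eq[OF s])
  ultimately show ?thesis by simp
qed

lemma tm_nonneg: "0 \<le> tm s j" by (simp add: tm_def)

lemma tm_partial: "s > 2 \<Longrightarrow> (\<Sum>j<J. tm s j) \<le> Gc s"
  unfolding Gc_def by (rule sum_le_suminf) (auto intro: tm_summable tm_nonneg)


lemma powr_split2: "0 \<le> x \<Longrightarrow> x powr s = x powr (s - 2) * x^2" for x s :: real
proof (cases "x = 0")
  case False
  assume "0 \<le> x"
  then have x: "0 < x" using False by simp
  have "x powr s = x powr (s - 2) * x powr 2" by (simp add: powr_add[symmetric])
  also have "x powr 2 = x^2" using powr_realpow[OF x, of 2] by simp
  finally show ?thesis .
qed simp

lemma sq_powr: "0 \<le> x \<Longrightarrow> (x^2) powr s = x powr (2 * s)" for x s :: real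
proof (cases "x = 0")
  case False
  assume "0 \<le> x"
  then have x: "0 < x" using False by simp
  have "x^2 = x powr 2" using powr_realpow[OF x, of 2] by simp
  then show ?thesis by (simp add: powr_powr)
qed simp

lemma Gc_nonneg: "s > 2 \<Longrightarrow> 0 \<le> Gc s"
  unfolding Gc_def by (intro suminf_nonneg tm_summable tm_nonneg)

context bf begin

lemma SJ_bound:
  assumes s: "s > 2" and N: "finite N"
  shows "(\<Sum>(n,m)\<in>N. cmod (\<Sum>j<J. Bj n m j) powr s) \<le> Gc s * Q2 powr (s - 2) * (Q4 / 2)"
proof -
  have "(\<Sum>(n,m)\<in>N. cmod (\<Sum>j<J. Bj n m j) powr s) \<le> (\<Sum>(n,m)\<in>N. \<Sum>j<J. wt s j powr (1 - s) * cmod (Bj n m j) powr s)"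
  proof (rule sum_mono, clarify)
    fix n m
    have "cmod (\<Sum>j<J. Bj n m j) powr s \<le> (\<Sum>j<J. cmod (Bj n m j)) powr s"
      using s by (intro powr_mono2 norm_sum) auto
    also have "\<dots> \<le> (\<Sum>j<J. wt s j powr (1 - s) * cmod (Bj n m j) powr s)"
      by (rule power_mean) (use s wt_pos wt_sum in auto)
    finally show "cmod (\<Sum>j<J. Bj n m j) powr s \<le> (\<Sum>j<J. wt s j powr (1 - s) * cmod (Bj n m j) powr s)" .
  qed
  also have "\<dots> = (\<Sum>j<J. wt s j powr (1 - s) * (\<Sum>(n,m)\<in>N. cmod (Bj n m j) powr s))"
    unfolding case_prod_unfold by (subst sum.swap) (simp add: sum_distrib_left)
  also have "\<dots> \<le> (\<Sum>j<J. wt s j powr (1 - s) * (((1/2)^(Suc j)) powr (s - 2) * Q2 powr (s - 2) * (Q4 / 2)))"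
  proof (rule sum_mono, rule mult_left_mono)
    fix j
    have "(\<Sum>(n,m)\<in>N. cmod (Bj n m j) powr s) \<le> (\<Sum>(n,m)\<in>N. ((1/2)^(Suc j) * Q2) powr (s - 2) * (cmod (Bj n m j))^2)"
    proof (rule sum_mono, clarify)
      fix n m
      have "cmod (Bj n m j) powr s = cmod (Bj n m j) powr (s - 2) * (cmod (Bj n m j))^2"
        by (rule powr_split2) simp
      also have "\<dots> \<le> ((1/2)^(Suc j) * Q2) powr (s - 2) * (cmod (Bj n m j))^2"
        using s by (intro mult_right_mono powr_mono2 Bj_bound) auto
      finally show "cmod (Bj n m j) powr s \<le> ((1/2)^(Suc j) * Q2) powr (s - 2) * (cmod (Bj n m j))^2" .
    qed
    also have "\<dots> = ((1/2)^(Suc j) * Q2) powr (s - 2) * (\<Sum>(n,m)\<in>N. (cmod (Bj n m j))^2)"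
      by (simp add: sum_distrib_left case_prod_unfold)
    also have "\<dots> \<le> ((1/2)^(Suc j) * Q2) powr (s - 2) * (Q4 / 2)"
      by (intro mult_left_mono Bj_l2 N) simp
    also have "((1/2::real)^(Suc j) * Q2) powr (s - 2) = ((1/2)^(Suc j)) powr (s - 2) * Q2 powr (s - 2)"
      by (rule powr_mult)
    finally show "(\<Sum>(n,m)\<in>N. cmod (Bj n m j) powr s) \<le> ((1/2)^(Suc j)) powr (s - 2) * Q2 powr (s - 2) * (Q4 / 2)" .
  qed simp
  also have "\<dots> = (\<Sum>j<J. tm s j) * (Q2 powr (s - 2) * (Q4 / 2))"
    by (simp only: tm_def sum_distrib_right mult.assoc)
  also have "\<dots> \<le> Gc s * (Q2 powr (s - 2) * (Q4 / 2))"
    using Q4_nonneg by (intro mult_right_mono tm_partial s) auto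
  finally show ?thesis by (simp add: mult_ac)
qed

lemma P_bound:
  assumes s: "s > 2" and N: "finite N"
  shows "(\<Sum>(n,m)\<in>N. cmod (P n m) powr s) \<le> Gc s * Q2 powr (s - 2) * (Q4 / 2)"
proof (rule LIMSEQ_le_const2)
  show "(\<lambda>J. \<Sum>(n,m)\<in>N. cmod (\<Sum>j<J. Bj n m j) powr s) \<longlonglongrightarrow> (\<Sum>(n,m)\<in>N. cmod (P n m) powr s)"
    unfolding case_prod_unfold
    by (intro tendsto_sum tendsto_powr' tendsto_norm Bj_tendsto tendsto_const) (use s in auto)
  show "\<exists>N0. \<forall>J\<ge>N0. (\<Sum>(n,m)\<in>N. cmod (\<Sum>j<J. Bj n m j) powr s) \<le> Gc s * Q2 powr (s - 2) * (Q4 / 2)"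
    using SJ_bound[OF s N] by blast
qed

lemma aa_bound:
  assumes s: "s > 2" and N: "finite N"
  shows "(\<Sum>(n,m)\<in>N. cmod (aa n m) powr (2 * s)) \<le> (2 powr s * Gc s / 2) * Q4 powr (s / 2)"
proof -
  have "(\<Sum>(n,m)\<in>N. cmod (aa n m) powr (2 * s)) \<le> (\<Sum>(n,m)\<in>N. 2 powr s * cmod (P n m) powr s)"
  proof (rule sum_mono, clarify)
    fix n m
    have "cmod (aa n m) powr (2 * s) = ((cmod (aa n m))^2) powr s" by (simp add: sq_powr)
    also have "\<dots> = (2 * Re (P n m)) powr s" by (simp add: aa_P)
    also have "\<dots> \<le> (2 * cmod (P n m)) powr s"
      using s aa_P[of n m] zero_le_power2[of "cmod (aa n m)"] by (intro powr_mono2) (auto simp: complex_Re_le_cmod)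
    also have "\<dots> = 2 powr s * cmod (P n m) powr s" by (rule powr_mult)
    finally show "cmod (aa n m) powr (2 * s) \<le> 2 powr s * cmod (P n m) powr s" .
  qed
  also have "\<dots> = 2 powr s * (\<Sum>(n,m)\<in>N. cmod (P n m) powr s)"
    by (simp add: sum_distrib_left case_prod_unfold)
  also have "\<dots> \<le> 2 powr s * (Gc s * Q2 powr (s - 2) * (Q4 / 2))"
    by (intro mult_left_mono P_bound s N) simp
  also have "\<dots> \<le> 2 powr s * (Gc s * Q4 powr ((s - 2) / 2) * (Q4 / 2))"
  proof -
    have "Q2 powr (s - 2) \<le> (sqrt Q4) powr (s - 2)"
      using s Q2_nonneg Q2_le by (intro powr_mono2) auto
    also have "(sqrt Q4) powr (s - 2) = Q4 powr ((s - 2) / 2)"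
      using Q4_nonneg by (simp add: powr_half_sqrt[symmetric] powr_powr)
    finally have "Q2 powr (s - 2) \<le> Q4 powr ((s - 2) / 2)" .
    then show ?thesis using Gc_nonneg[OF s] Q4_nonneg
      by (intro mult_left_mono mult_right_mono) auto
  qed
  also have "\<dots> = (2 powr s * Gc s / 2) * (Q4 powr ((s - 2) / 2) * Q4)" by (simp add: mult_ac)
  also have "Q4 powr ((s - 2) / 2) * Q4 = Q4 powr (s / 2)"
  proof (cases "Q4 = 0")
    case False
    then have "Q4 > 0" using Q4_nonneg by simp
    then have "Q4 powr ((s - 2) / 2) * Q4 powr 1 = Q4 powr (s / 2)"
      using powr_add[of Q4 "(s - 2) / 2" 1] by (simp add: diff_divide_distrib)
    then show ?thesis using \<open>Q4 > 0\<close> by simp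
  qed simp
  finally show ?thesis .
qed

end


definition ee2 :: "nat \<Rightarrow> int \<times> int" where
  "ee2 k = (int_decode (fst (prod_decode k)), int_decode (snd (prod_decode k)))"
definition dd2 :: "int \<times> int \<Rightarrow> nat" where
  "dd2 q = prod_encode (int_encode (fst q), int_encode (snd q))"

lemma ee2_dd2: "ee2 (dd2 q) = q" by (simp add: ee2_def dd2_def)
lemma dd2_ee2: "dd2 (ee2 k) = k" by (simp add: ee2_def dd2_def)
lemma inj_ee2: "inj ee2" by (metis dd2_ee2 injI)

definition Sq :: "int \<times> int \<Rightarrow> (real \<times> real) set" where
  "Sq q = {real_of_int (fst q)..<real_of_int (fst q) + 1} \<times> {real_of_int (snd q)..<real_of_int (snd q) + 1}"

lemma in_Sq: "z \<in> Sq (\<lfloor>fst z\<rfloor>, \<lfloor>snd z\<rfloor>)"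
  by (cases z) (simp add: Sq_def)

lemma step_integral:
  fixes G :: "int \<times> int \<Rightarrow> real"
  assumes G0: "\<And>q. 0 \<le> G q" and GB: "\<And>N. finite N \<Longrightarrow> (\<Sum>q\<in>N. G q) \<le> Bd"
  shows "(\<integral>\<^sup>+ z. ennreal (G (\<lfloor>fst z\<rfloor>, \<lfloor>snd z\<rfloor>)) \<partial>(lborel :: (real \<times> real) measure)) \<le> ennreal Bd"
proof -
  have L: "(lborel :: (real \<times> real) measure) = lborel \<Otimes>\<^sub>M lborel" by (rule lborel_prod[symmetric])
  define H where "H k z = ennreal (G (ee2 k)) * indicator (Sq (ee2 k)) z" for k z
  have Sq_sets: "Sq q \<in> sets (lborel \<Otimes>\<^sub>M lborel)" for q
    unfolding Sq_def by (intro pair_measureI) auto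
  have Hm: "H k \<in> borel_measurable (lborel \<Otimes>\<^sub>M lborel)" for k
    unfolding H_def using Sq_sets by measurable
  have pt: "ennreal (G (\<lfloor>fst z\<rfloor>, \<lfloor>snd z\<rfloor>)) \<le> (\<Sum>k. H k z)" for z
  proof -
    define k0 where "k0 = dd2 (\<lfloor>fst z\<rfloor>, \<lfloor>snd z\<rfloor>)"
    have "ennreal (G (\<lfloor>fst z\<rfloor>, \<lfloor>snd z\<rfloor>)) = H k0 z"
      by (simp add: H_def k0_def ee2_dd2 in_Sq)
    also have "\<dots> \<le> (\<Sum>k<Suc k0. H k z)" by (rule member_le_sum) auto
    also have "\<dots> \<le> (\<Sum>k. H k z)" unfolding suminf_eq_SUP by (rule SUP_upper) simp
    finally show ?thesis .
  qed
  have "(\<integral>\<^sup>+ z. ennreal (G (\<lfloor>fst z\<rfloor>, \<lfloor>snd z\<rfloor>)) \<partial>(lborel :: (real \<times> real) measure))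
      \<le> (\<integral>\<^sup>+ z. (\<Sum>k. H k z) \<partial>(lborel \<Otimes>\<^sub>M lborel))"
    unfolding L by (intro nn_integral_mono pt)
  also have "\<dots> = (\<Sum>k. \<integral>\<^sup>+ z. H k z \<partial>(lborel \<Otimes>\<^sub>M lborel))"
    by (rule nn_integral_suminf) (rule Hm)
  also have "\<dots> = (\<Sum>k. ennreal (G (ee2 k)))"
  proof -
    have "(\<integral>\<^sup>+ z. H k z \<partial>(lborel \<Otimes>\<^sub>M lborel)) = ennreal (G (ee2 k))" for k
    proof -
      have "(\<integral>\<^sup>+ z. H k z \<partial>(lborel \<Otimes>\<^sub>M lborel)) = ennreal (G (ee2 k)) * emeasure (lborel \<Otimes>\<^sub>M lborel) (Sq (ee2 k))"
        unfolding H_def by (rule nn_integral_cmult_indicator[OF Sq_sets])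
      also have "emeasure (lborel \<Otimes>\<^sub>M lborel) (Sq (ee2 k)) = 1"
        unfolding Sq_def by (subst lborel.emeasure_pair_measure_Times) auto
      finally show ?thesis by simp
    qed
    then show ?thesis by simp
  qed
  also have "\<dots> \<le> ennreal Bd"
    unfolding suminf_eq_SUP
  proof (rule SUP_least)
    fix K
    have "(\<Sum>k<K. ennreal (G (ee2 k))) = ennreal (\<Sum>k<K. G (ee2 k))"
      using G0 by (simp add: sum_ennreal)
    also have "(\<Sum>k<K. G (ee2 k)) = (\<Sum>q\<in>ee2 ` {..<K}. G q)"
      by (rule sum.reindex[symmetric, unfolded comp_def]) (use inj_ee2 in \<open>auto intro: inj_on_subset\<close>)
    also have "\<dots> \<le> Bd" by (rule GB) simp
    finally show "(\<Sum>k<K. ennreal (G (ee2 k))) \<le> ennreal Bd" by (simp add: ennreal_leI)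
  qed
  finally show ?thesis .
qed

lemma powr4: "0 \<le> x \<Longrightarrow> x powr 4 = x ^ 4" for x :: real
proof (cases "x = 0")
  case False
  assume "0 \<le> x" then have "0 < x" using False by simp
  from powr_realpow[OF this, of 4] show ?thesis by simp
qed simp

lemma chi_eq: "chi n x = (if \<lfloor>x\<rfloor> = n then 1 else 0)"
  by (simp add: chi_def indicator_def floor_eq_iff)

lemma exp_ee: "exp (2 * complex_of_real pi * \<i> * of_int n * complex_of_real x) = ee (of_int n * x)"
  by (simp add: ee_exp mult_ac)

theorem proposition4p3:
  fixes \<phi> :: "real \<Rightarrow> real"
  assumes "smooth_compact_support \<phi>"
    and "\<forall>x\<in>{0..1}. \<phi> x = 1"
  shows "\<forall>\<epsilon>>0. \<exists>C. \<forall>g :: real \<Rightarrow> complex. continuous_on {0..1} g \<longrightarrow>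
           Lp_norm (lborel :: (real \<times> real) measure) (4 + \<epsilon>) (E1 \<phi> g)
             \<le> ennreal (C * enn2real (Lp_norm lborel 4 (ext0 g)))"
proof (intro allI impI)
  fix \<epsilon> :: real assume \<epsilon>: "\<epsilon> > 0"
  have phi1: "\<And>x. x \<in> {0..1} \<Longrightarrow> \<phi> x = 1" using assms(2) by blast
  define p where "p = 4 + \<epsilon>"
  define s where "s = p / 2"
  have s2: "s > 2" and p2s: "p = 2 * s" and p0: "p > 0" using \<epsilon> by (auto simp: s_def p_def)
  define Kc where "Kc = 2 powr s * Gc s / 2"
  have Kc0: "0 \<le> Kc" using Gc_nonneg[OF s2] by (simp add: Kc_def)
  show "\<exists>C. \<forall>g :: real \<Rightarrow> complex. continuous_on {0..1} g \<longrightarrow>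
           Lp_norm (lborel :: (real \<times> real) measure) (4 + \<epsilon>) (E1 \<phi> g)
             \<le> ennreal (C * enn2real (Lp_norm lborel 4 (ext0 g)))"
  proof (intro exI allI impI)
    fix g :: "real \<Rightarrow> complex" assume gc: "continuous_on {0..1} g"
    define f where "f = ext0 g"
    have "bounded (g ` {0..1})" by (intro compact_imp_bounded compact_continuous_image gc compact_Icc)
    then obtain M where Mpos: "M > 0" and M: "\<And>y. y \<in> g ` {0..1} \<Longrightarrow> norm y \<le> M" unfolding bounded_pos by blast
    have fb: "cmod (f x) \<le> M" for x
    proof (cases "x \<in> {0..1}")
      case True then show ?thesis using M[of "g x"] by (simp add: f_def ext0_def)
    next
      case False
      then have "f x = 0" by (auto simp: f_def ext0_def)
      moreover have "0 \<le> M" using Mpos by simp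
      ultimately show ?thesis by simp
    qed
    have fm: "f \<in> borel_measurable borel"
    proof -
      have "f = (\<lambda>x. indicator {0..1} x *\<^sub>R g x)" by (rule ext) (simp add: f_def ext0_def indicator_def)
      then show ?thesis using borel_measurable_continuous_on_indicator[OF _ gc] by simp
    qed
    have fs: "\<And>x. x \<notin> {0..1} \<Longrightarrow> f x = 0" by (auto simp: f_def ext0_def)
    interpret bf f M by standard (fact fm, fact fb, fact fs)
    have inner: "inner_L2 f (phi_nm \<phi> n m) = aa n m" for n m
      unfolding inner_L2_def aa_def
    proof (intro Bochner_Integration.integral_cong refl)
      fix x
      show "f x * cnj (phi_nm \<phi> n m x) = f x * ee (- (of_int n * x + of_int m * x^2))"
      proof (cases "x \<in> {0..1}")
        case True
        have "phi_nm \<phi> n m x = ee (of_int n * x) * ee (of_int m * x^2)"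
          unfolding phi_nm_def using phi1[OF True] exp_ee[of n x] exp_ee[of m "x^2"] by simp
        then have "cnj (phi_nm \<phi> n m x) = ee (- (of_int n * x + of_int m * x^2))"
          by (simp add: ee_cnj ee_add[symmetric])
        then show ?thesis by simp
      qed (simp add: fs)
    qed
    have E1eq: "E1 \<phi> g z = aa \<lfloor>fst z\<rfloor> \<lfloor>snd z\<rfloor>" for z
    proof (cases z)
      case (Pair x t)
      define F where "F = (\<lambda>(n, m). inner_L2 (ext0 g) (phi_nm \<phi> n m) * chi n x * chi m t)"
      have "E1 \<phi> g z = infsum F UNIV" by (simp add: E1_def Pair F_def)
      also have "\<dots> = infsum F {(\<lfloor>x\<rfloor>, \<lfloor>t\<rfloor>)}"
        by (rule infsum_cong_neutral) (auto simp: F_def chi_eq split: if_splits)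
      also have "\<dots> = aa \<lfloor>x\<rfloor> \<lfloor>t\<rfloor>" by (simp add: F_def chi_eq f_def[symmetric] inner)
      finally show ?thesis by (simp add: Pair)
    qed
    define Bd where "Bd = Kc * Q4 powr (s / 2)"
    have Bd0: "0 \<le> Bd" using Kc0 by (simp add: Bd_def)
    define I where "I = (\<integral>\<^sup>+ z. ennreal (cmod (E1 \<phi> g z) powr (4 + \<epsilon>)) \<partial>(lborel :: (real \<times> real) measure))"
    have IB: "I \<le> ennreal Bd"
    proof -
      have "I = (\<integral>\<^sup>+ z. ennreal ((\<lambda>q. cmod (aa (fst q) (snd q)) powr p) (\<lfloor>fst z\<rfloor>, \<lfloor>snd z\<rfloor>)) \<partial>(lborel :: (real \<times> real) measure))"
        unfolding I_def E1eq p_def by simp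
      also have "\<dots> \<le> ennreal Bd"
      proof (rule step_integral)
        fix N :: "(int \<times> int) set" assume N: "finite N"
        have "(\<Sum>q\<in>N. cmod (aa (fst q) (snd q)) powr p) = (\<Sum>(n,m)\<in>N. cmod (aa n m) powr (2 * s))"
          by (simp add: case_prod_unfold p2s)
        also have "\<dots> \<le> Bd" unfolding Bd_def Kc_def by (rule aa_bound[OF s2 N])
        finally show "(\<Sum>q\<in>N. cmod (aa (fst q) (snd q)) powr p) \<le> Bd" .
      qed simp
      finally show ?thesis .
    qed
    have Ifin: "I < top" using IB by (simp add: order_le_less_trans)
    have rB: "enn2real I \<le> Bd"
    proof -
      have "ennreal (enn2real I) \<le> ennreal Bd" using IB Ifin by simp
      then show ?thesis using Bd0 by (simp add: ennreal_le_iff)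
    qed
    have LHS: "Lp_norm (lborel :: (real \<times> real) measure) (4 + \<epsilon>) (E1 \<phi> g) = ennreal (enn2real I powr (1 / p))"
      unfolding Lp_norm_def Let_def I_def[symmetric] using Ifin by (simp add: p_def)
    have I4: "(\<integral>\<^sup>+ x. ennreal (cmod (ext0 g x) powr 4) \<partial>lborel) = ennreal Q4"
    proof -
      have "(\<integral>\<^sup>+ x. ennreal (cmod (ext0 g x) powr 4) \<partial>lborel) = (\<integral>\<^sup>+ x. ennreal ((cmod (f x))^4) \<partial>lborel)"
        by (simp add: f_def powr4)
      also have "\<dots> = ennreal Q4" unfolding Q4_def
        by (rule nn_integral_eq_integral) (auto intro: int_pow)
      finally show ?thesis .
    qed
    have RHS: "enn2real (Lp_norm lborel 4 (ext0 g)) = Q4 powr (1/4)"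
      unfolding Lp_norm_def Let_def I4 using Q4_nonneg by simp
    have "enn2real I powr (1 / p) \<le> Bd powr (1 / p)"
      using rB p0 by (intro powr_mono2) auto
    also have "\<dots> = Kc powr (1 / p) * Q4 powr (1/4)"
    proof -
      have "Bd powr (1 / p) = Kc powr (1 / p) * (Q4 powr (s / 2)) powr (1 / p)"
        unfolding Bd_def by (rule powr_mult)
      also have "(Q4 powr (s / 2)) powr (1 / p) = Q4 powr (1/4)"
        unfolding powr_powr using p0 by (simp add: s_def)
      finally show ?thesis .
    qed
    finally have fin: "enn2real I powr (1 / p) \<le> Kc powr (1 / (4 + \<epsilon>)) * enn2real (Lp_norm lborel 4 (ext0 g))"
      unfolding RHS by (simp add: p_def)
    show "Lp_norm (lborel :: (real \<times> real) measure) (4 + \<epsilon>) (E1 \<phi> g)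
             \<le> ennreal (Kc powr (1 / (4 + \<epsilon>)) * enn2real (Lp_norm lborel 4 (ext0 g)))"
      unfolding LHS using fin by (rule ennreal_leI)
  qed
qed


end
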